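(* Let $A\in\mathbb{R}^{n\times n}$ be Metzler and Hurwitz stable, $b_0\in\mathbb{R}^n_{\ge0}$, $g_0:=-e_n^TA^{-1}b_0$, $g_n:=-e_n^TA^{-1}e_n$, and $0<\mu<g_0$. For $\alpha,k_p>0$ consider $$\dot x=Ax-k_px_nze_n+b_0,\qquad \dot z=-\alpha z(\mu-e_n^Tx),$$ and its equilibrium with $z^*=\dfrac{g_0-\mu}{g_n\mu k_p}>0$ and $x^*=-A^{-1}(b_0-k_p\mu z^*e_n)$. Then this equilibrium is locally exponentially stable for all $\alpha,k_p>0$.
   Context: $e_i$ standard basis vectors; $x_n=e_n^Tx$. Metzler: all off-diagonal entries nonnegative. Hurwitz stable: all eigenvalues have negative real part. An equilibrium is called locally exponentially stable here if the Jacobian matrix of the vector field at the equilibrium is Hurwitz stable. *)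

theory Defs
  imports "HOL-Analysis.Analysis"
begin

definition metzler :: "real^'n^'n \<Rightarrow> bool" where
  "metzler A \<longleftrightarrow> (\<forall>i j. i \<noteq> j \<longrightarrow> A $ i $ j \<ge> 0)"

definition eigenvalue :: "real^'n^'n \<Rightarrow> complex \<Rightarrow> bool" where
  "eigenvalue M lam \<longleftrightarrow>
     (\<exists>v :: complex^'n. v \<noteq> 0 \<and> (\<chi> i j. complex_of_real (M $ i $ j)) *v v = lam *s v)"

definition hurwitz :: "real^'n^'n \<Rightarrow> bool" where
  "hurwitz M \<longleftrightarrow> (\<forall>lam. eigenvalue M lam \<longrightarrow> Re lam < 0)"

definition loc_exp_stable :: "(real^'m \<Rightarrow> real^'m) \<Rightarrow> real^'m \<Rightarrow> bool" where
  "loc_exp_stable f p \<longleftrightarrow> (\<exists>J. (f has_derivative (\<lambda>h. J *v h)) (at p) \<and> hurwitz J)"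

text \<open>The closed-loop vector field on the state space indexed by 'n option:
  component Some i is x_i, component None is z. The distinguished index j plays the role of n.\<close>
definition closed_loop ::
  "real^'n^'n \<Rightarrow> real^'n \<Rightarrow> 'n \<Rightarrow> real \<Rightarrow> real \<Rightarrow> real \<Rightarrow> real^('n option) \<Rightarrow> real^('n option)" where
  "closed_loop A b0 j kp alpha mu w =
     (let x = (\<chi> i. w $ Some i); z = w $ None in
      (\<chi> k. case k of
         Some i \<Rightarrow> (A *v x) $ i - kp * x $ j * z * (axis j 1 :: real^'n) $ i + b0 $ i
       | None \<Rightarrow> - alpha * z * (mu - x $ j)))"

end

theory Submission
  imports Defs
begin

lemma matmul_entry: "((X::real^'n^'n) ** Y) $ i $ k = (\<Sum>l\<in>UNIV. X$i$l * Y$l$k)"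
  by (simp add: matrix_matrix_mult_def)

lemma sum_delta_mult: "(\<Sum>l\<in>UNIV. (if (i::'n::finite) = l then (c::real) else 0) * f l) = c * f i"
proof -
  have "(\<Sum>l\<in>UNIV. (if i = l then c else 0) * f l) = (\<Sum>l\<in>UNIV. if i = l then c * f l else 0)"
    by (rule sum.cong) auto
  also have "\<dots> = c * f i" using sum.delta'[of UNIV i "\<lambda>l. c * f l"] by simp
  finally show ?thesis .
qed

lemma mat_vec: "(mat c :: real^'n^'n) *v x = c *s x"
  by (simp add: vec_eq_iff matrix_vector_mult_def mat_def sum_delta_mult)

lemma mat_entry: "(mat c :: real^'n^'n) $ i $ k = (if i = k then c else 0)"
  by (simp add: mat_def)

lemma mat_mul_left: "(mat c :: real^'n^'n) ** X = c *\<^sub>R X"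
  by (simp add: vec_eq_iff matmul_entry mat_entry sum_delta_mult)

lemma matrix_add_rdistrib': "((X::real^'n^'n) + Y) ** Z = X ** Z + Y ** Z"
  by (simp add: vec_eq_iff matmul_entry distrib_right sum.distrib)

lemma matrix_diff_ldistrib': "(Z::real^'n^'n) ** (X - Y) = Z ** X - Z ** Y"
  by (simp add: vec_eq_iff matmul_entry right_diff_distrib sum_subtractf)

lemma matrix_scaleR_right': "(Z::real^'n^'n) ** (c *\<^sub>R Y) = c *\<^sub>R (Z ** Y)"
  by (simp add: vec_eq_iff matmul_entry sum_distrib_left mult_ac)

lemma hurwitz_real_eig:
  fixes M :: "real^'n^'n" and v :: "real^'n"
  assumes "hurwitz M" "t \<ge> 0" "M *v v = t *s v"
  shows "v = 0"
proof (rule ccontr)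
  assume nz: "v \<noteq> 0"
  define vc where "vc = (\<chi> i. complex_of_real (v $ i))"
  have "vc \<noteq> 0" using nz by (auto simp: vc_def vec_eq_iff)
  moreover have "(\<chi> i j. complex_of_real (M $ i $ j)) *v vc = complex_of_real t *s vc"
  proof -
    have h: "\<And>i. (\<Sum>j\<in>UNIV. M$i$j * v$j) = t * v$i"
      using assms(3) by (simp add: vec_eq_iff matrix_vector_mult_def)
    have "\<And>i. (\<Sum>j\<in>UNIV. complex_of_real (M$i$j) * complex_of_real (v$j)) = complex_of_real t * complex_of_real (v$i)"
    proof -
      fix i
      have "(\<Sum>j\<in>UNIV. complex_of_real (M$i$j) * complex_of_real (v$j)) = complex_of_real (\<Sum>j\<in>UNIV. M$i$j * v$j)"
        by (simp add: of_real_sum)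
      then show "(\<Sum>j\<in>UNIV. complex_of_real (M$i$j) * complex_of_real (v$j)) = complex_of_real t * complex_of_real (v$i)"
        using h by simp
    qed
    then show ?thesis by (simp add: vec_eq_iff matrix_vector_mult_def vc_def)
  qed
  ultimately have "eigenvalue M (complex_of_real t)" unfolding eigenvalue_def by blast
  then show False using assms(1,2) unfolding hurwitz_def by fastforce
qed

lemma invertible_of_ker:
  fixes M :: "real^'n^'n"
  assumes "\<And>x. M *v x = 0 \<Longrightarrow> x = 0"
  shows "M ** matrix_inv M = mat 1" "matrix_inv M ** M = mat 1"
proof -
  have "invertible M" using assms invertible_left_inverse matrix_left_invertible_ker by blast
  then have "\<exists>A'. M ** A' = mat 1 \<and> A' ** M = mat 1" by (simp add: invertible_def)
  then have "M ** matrix_inv M = mat 1 \<and> matrix_inv M ** M = mat 1"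
    unfolding matrix_inv_def by (rule someI_ex)
  then show "M ** matrix_inv M = mat 1" "matrix_inv M ** M = mat 1" by auto
qed

lemma hurwitz_resolvent:
  fixes A :: "real^'n^'n"
  assumes "hurwitz A" "t \<ge> 0"
  shows "(mat t - A) ** matrix_inv (mat t - A) = mat 1" "matrix_inv (mat t - A) ** (mat t - A) = mat 1"
proof -
  have "\<And>x. (mat t - A) *v x = 0 \<Longrightarrow> x = 0"
  proof -
    fix x assume "(mat t - A) *v x = 0"
    then have "A *v x = t *s x"
      by (simp add: matrix_vector_mult_diff_rdistrib mat_vec)
    then show "x = 0" using hurwitz_real_eig assms by blast
  qed
  then show "(mat t - A) ** matrix_inv (mat t - A) = mat 1" "matrix_inv (mat t - A) ** (mat t - A) = mat 1"
    using invertible_of_ker by blast+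
qed

lemma resolvent_identity:
  fixes A :: "real^'n^'n"
  assumes "hurwitz A" "t \<ge> 0" "u \<ge> 0"
  shows "matrix_inv (mat u - A) = matrix_inv (mat t - A) + (t - u) *\<^sub>R (matrix_inv (mat t - A) ** matrix_inv (mat u - A))"
proof -
  let ?Rt = "matrix_inv (mat t - A)" and ?Ru = "matrix_inv (mat u - A)"
  have e: "mat t - A = (mat u - A) + mat (t - u)"
    by (simp add: vec_eq_iff mat_def)
  have "?Ru = (?Rt ** (mat t - A)) ** ?Ru" using hurwitz_resolvent[OF assms(1,2)] by simp
  also have "\<dots> = ?Rt ** ((mat t - A) ** ?Ru)" by (simp add: matrix_mul_assoc)
  also have "(mat t - A) ** ?Ru = mat 1 + (t - u) *\<^sub>R ?Ru"
    unfolding e matrix_add_rdistrib' using hurwitz_resolvent[OF assms(1,3)] by (simp add: mat_mul_left)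
  finally show ?thesis by (simp add: matrix_add_ldistrib matrix_scaleR_right')
qed

lemma neumann_nonneg:
  fixes X Q M :: "real^'n^'n"
  assumes X: "X = Q + M ** X" and Q: "\<forall>i k. 0 \<le> Q$i$k"
    and M0: "\<forall>i k. 0 \<le> M$i$k" and Mc: "\<forall>i k. M$i$k \<le> c"
    and c: "real CARD('n) * c < 1"
  shows "0 \<le> X$i$k"
proof -
  define a where "a = real CARD('n) * c"
  obtain i0 k0 :: 'n where True by blast
  have "0 \<le> M$i0$k0" "M$i0$k0 \<le> c" using M0 Mc by auto
  then have c0: "0 \<le> c" by linarith
  have a0: "0 \<le> a" "a < 1" using c0 c by (auto simp: a_def)
  have inv: "\<exists>S Y. X = S + Y ** X \<and> (\<forall>i k. 0 \<le> S$i$k) \<and> (\<forall>i k. 0 \<le> Y$i$k \<and> Y$i$k \<le> a^m)" for m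
  proof (induction m)
    case 0
    show ?case
      by (rule exI[of _ 0], rule exI[of _ "mat 1"]) (simp add: mat_entry)
  next
    case (Suc m)
    then obtain S Y where h: "X = S + Y ** X" "\<forall>i k. 0 \<le> S$i$k" "\<forall>i k. 0 \<le> Y$i$k \<and> Y$i$k \<le> a^m"
      by blast
    have "X = (S + Y ** Q) + (Y ** M) ** X"
    proof -
      have "X = S + Y ** (Q + M ** X)"
        using h(1) arg_cong[of X "Q + M ** X" "\<lambda>Z. S + Y ** Z", OF X] by (rule trans)
      also have "\<dots> = (S + Y ** Q) + (Y ** M) ** X"
        by (simp add: matrix_add_ldistrib matrix_mul_assoc add.assoc)
      finally show ?thesis .
    qed
    moreover have "\<forall>i k. 0 \<le> (S + Y ** Q)$i$k"
      using h(2,3) Q by (simp add: matmul_entry sum_nonneg)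
    moreover have "\<forall>i k. 0 \<le> (Y ** M)$i$k \<and> (Y ** M)$i$k \<le> a^Suc m"
    proof (intro allI conjI)
      fix i k
      show "0 \<le> (Y ** M)$i$k" using h(3) M0 by (simp add: matmul_entry sum_nonneg)
      have "(Y ** M)$i$k \<le> (\<Sum>l\<in>(UNIV::'n set). a^m * c)"
        unfolding matmul_entry
      proof (rule sum_mono)
        fix l
        have "Y$i$l \<le> a^m" "0 \<le> Y$i$l" "M$l$k \<le> c" "0 \<le> M$l$k" using h(3) M0 Mc by auto
        then show "Y$i$l * M$l$k \<le> a^m * c" by (intro mult_mono) auto
      qed
      also have "\<dots> = a^Suc m" by (simp add: a_def)
      finally show "(Y ** M)$i$k \<le> a^Suc m" .
    qed
    ultimately show ?case by blast
  qed
  define K where "K = (\<Sum>l\<in>(UNIV::'n set). \<bar>X$l$k\<bar>)"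
  have lb: "- (a^m * K) \<le> X$i$k" for m
  proof -
    obtain S Y where h: "X = S + Y ** X" "\<forall>i k. 0 \<le> S$i$k" "\<forall>i k. 0 \<le> Y$i$k \<and> Y$i$k \<le> a^m"
      using inv by blast
    have "X$i$k = (S + Y ** X)$i$k" using h(1) by (rule arg_cong[where f="\<lambda>Z. Z$i$k"])
    then have "X$i$k = S$i$k + (\<Sum>l\<in>UNIV. Y$i$l * X$l$k)"
      by (simp add: matmul_entry)
    moreover have "- (a^m * K) \<le> (\<Sum>l\<in>UNIV. Y$i$l * X$l$k)"
    proof -
      have "(\<Sum>l\<in>UNIV. - (a^m * \<bar>X$l$k\<bar>)) \<le> (\<Sum>l\<in>UNIV. Y$i$l * X$l$k)"
      proof (rule sum_mono)
        fix l
        have "\<bar>Y$i$l * X$l$k\<bar> \<le> a^m * \<bar>X$l$k\<bar>"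
          using h(3) by (simp add: abs_mult mult_right_mono)
        then show "- (a^m * \<bar>X$l$k\<bar>) \<le> Y$i$l * X$l$k" by linarith
      qed
      then show ?thesis by (simp add: K_def sum_negf sum_distrib_left)
    qed
    moreover have "0 \<le> S$i$k" using h(2) by blast
    ultimately show ?thesis by linarith
  qed
  show ?thesis
  proof (rule ccontr)
    assume neg: "\<not> 0 \<le> X$i$k"
    have K0: "K > 0"
    proof -
      have "\<bar>X$i$k\<bar> \<le> K" unfolding K_def
        by (rule member_le_sum) auto
      then show ?thesis using neg by linarith
    qed
    have "- X$i$k / K > 0" using neg K0 by (simp add: divide_neg_pos)
    then obtain m where "a^m < - X$i$k / K" using real_arch_pow_inv[of "- X$i$k / K" a] a0
      by blast
    then have "a^m * K < - X$i$k" using K0 by (simp add: field_simps)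
    then show False using lb[of m] by linarith
  qed
qed

lemma scaleR_matmul_left: "(c *\<^sub>R (X::real^'n^'n)) ** Y = c *\<^sub>R (X ** Y)"
  by (simp add: vec_eq_iff matmul_entry sum_distrib_left mult_ac)

lemma resolvent_base:
  fixes A :: "real^'n^'n"
  assumes "metzler A" "hurwitz A"
  shows "\<exists>t0\<ge>0. \<forall>i k. 0 \<le> matrix_inv (mat t0 - A) $ i $ k"
proof -
  define \<sigma> where "\<sigma> = (\<Sum>i\<in>UNIV. \<bar>A$i$i\<bar>)"
  define P where "P = A + mat \<sigma>"
  define cP where "cP = (\<Sum>i\<in>UNIV. \<Sum>k\<in>UNIV. \<bar>A$i$k\<bar>) + \<sigma>"
  define t0 where "t0 = real CARD('n) * cP + 1"
  define s where "s = t0 + \<sigma>"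
  have s0: "\<sigma> \<ge> 0" unfolding \<sigma>_def by (simp add: sum_nonneg)
  have cP0: "cP \<ge> 0" unfolding cP_def using s0 by (simp add: sum_nonneg)
  have t00: "t0 \<ge> 0" using cP0 by (simp add: t0_def)
  have "t0 \<ge> 1" using cP0 by (simp add: t0_def)
  then have spos: "s > 0" using s0 unfolding s_def by linarith
  have Pnn: "0 \<le> P$i$k" for i k
  proof (cases "i = k")
    case True
    have "\<bar>A$i$i\<bar> \<le> \<sigma>" unfolding \<sigma>_def by (rule member_le_sum) auto
    then show ?thesis using True by (simp add: P_def mat_entry)
  next
    case False
    then show ?thesis using assms(1) by (simp add: P_def mat_entry metzler_def)
  qed
  have Pc: "P$i$k \<le> cP" for i k
  proof -
    have "\<bar>A$i$k\<bar> \<le> (\<Sum>k\<in>UNIV. \<bar>A$i$k\<bar>)" by (rule member_le_sum) auto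
    also have "\<dots> \<le> (\<Sum>i\<in>UNIV. \<Sum>k\<in>UNIV. \<bar>A$i$k\<bar>)"
      by (rule member_le_sum) (auto simp: sum_nonneg)
    finally have "\<bar>A$i$k\<bar> \<le> (\<Sum>i\<in>UNIV. \<Sum>k\<in>UNIV. \<bar>A$i$k\<bar>)" .
    then show ?thesis using s0 by (auto simp: P_def mat_entry cP_def abs_le_iff)
  qed
  define X where "X = matrix_inv (mat t0 - A)"
  have eq: "mat t0 - A = mat s - P" by (simp add: vec_eq_iff P_def s_def mat_def)
  have "(mat s - P) ** X = mat 1" using hurwitz_resolvent[OF assms(2) t00] eq by (simp add: X_def)
  then have "s *\<^sub>R X - P ** X = mat 1"
    by (simp add: vec_eq_iff matmul_entry mat_entry sum_delta_mult sum_subtractf left_diff_distrib)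
  then have "s *\<^sub>R X = mat 1 + P ** X" by (simp add: algebra_simps)
  then have sX: "s *\<^sub>R X = mat 1 + P ** X" .
  have "X = (1/s) *\<^sub>R (s *\<^sub>R X)" using spos by simp
  also have "\<dots> = (1/s) *\<^sub>R (mat 1 + P ** X)" by (simp only: sX)
  also have "\<dots> = (1/s) *\<^sub>R mat 1 + ((1/s) *\<^sub>R P) ** X"
    by (simp add: scaleR_right_distrib scaleR_matmul_left)
  finally have Xeq: "X = (1/s) *\<^sub>R mat 1 + ((1/s) *\<^sub>R P) ** X" .
  have "0 \<le> X$i$k" for i k
  proof (rule neumann_nonneg[OF Xeq, where c="cP / s"])
    show "\<forall>i k. 0 \<le> ((1 / s) *\<^sub>R mat 1 :: real^'n^'n) $ i $ k" using spos by (simp add: mat_entry)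
    show "\<forall>i k. 0 \<le> ((1 / s) *\<^sub>R P) $ i $ k" using spos Pnn by simp
    show "\<forall>i k. ((1 / s) *\<^sub>R P) $ i $ k \<le> cP / s" using spos Pc by (simp add: divide_right_mono)
    have "real CARD('n) * cP < s" using s0 by (simp add: s_def t0_def)
    then show "real CARD('n) * (cP / s) < 1" using spos by (simp add: field_simps)
  qed
  then show ?thesis using t00 X_def by blast
qed

lemma resolvent_down:
  fixes A :: "real^'n^'n"
  assumes "hurwitz A" "u \<ge> 0" "u \<le> t"
    and nn: "\<forall>i k. 0 \<le> matrix_inv (mat t - A) $ i $ k"
    and bd: "\<forall>i k. matrix_inv (mat t - A) $ i $ k \<le> c"
    and small: "real CARD('n) * (t - u) * c < 1"
  shows "0 \<le> matrix_inv (mat u - A) $ i $ k"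
proof -
  have t0: "t \<ge> 0" using assms by linarith
  let ?Rt = "matrix_inv (mat t - A)"
  have Xeq: "matrix_inv (mat u - A) = ?Rt + ((t - u) *\<^sub>R ?Rt) ** matrix_inv (mat u - A)"
    unfolding scaleR_matmul_left by (rule resolvent_identity[OF assms(1) t0 assms(2)])
  show ?thesis
  proof (rule neumann_nonneg[OF Xeq nn, where c="(t - u) * c"])
    show "\<forall>i k. 0 \<le> ((t - u) *\<^sub>R ?Rt) $ i $ k" using nn assms(3) by simp
    show "\<forall>i k. ((t - u) *\<^sub>R ?Rt) $ i $ k \<le> (t - u) * c" using bd assms(3) by (simp add: mult_left_mono)
    show "real CARD('n) * ((t - u) * c) < 1" using small by (simp add: mult_ac)
  qed
qed

lemma resolvent_local_bound:
  fixes A :: "real^'n^'n"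
  assumes "hurwitz A" "t \<ge> 0" "u \<ge> 0"
    and bd: "\<forall>i k. \<bar>matrix_inv (mat t - A) $ i $ k\<bar> \<le> c"
    and small: "real CARD('n) * \<bar>t - u\<bar> * c \<le> 1/2"
  shows "\<bar>matrix_inv (mat u - A) $ i $ k\<bar> \<le> 2 * c"
proof -
  let ?Rt = "matrix_inv (mat t - A)" and ?Ru = "matrix_inv (mat u - A)"
  define f where "f = (\<lambda>(i,k). \<bar>?Ru $ i $ k\<bar>)"
  define m where "m = Max (range f)"
  have fm: "f p \<le> m" for p unfolding m_def by (rule Max_ge) auto
  have "m \<in> range f" unfolding m_def by (rule Max_in) auto
  then obtain p where pm: "f p = m" by auto
  obtain i0 k0 where p: "p = (i0, k0)" by (cases p)
  have "\<bar>?Rt$i$k\<bar> \<le> c" using bd by blast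
  moreover have "0 \<le> \<bar>?Rt$i$k\<bar>" by simp
  ultimately have c0: "0 \<le> c" by linarith
  have "?Ru $ i0 $ k0 = (?Rt + (t - u) *\<^sub>R (?Rt ** ?Ru)) $ i0 $ k0"
    by (rule arg_cong[where f="\<lambda>Z. Z$i0$k0", OF resolvent_identity[OF assms(1,2,3)]])
  also have "\<dots> = ?Rt $ i0 $ k0 + (t - u) * (\<Sum>l\<in>UNIV. ?Rt$i0$l * ?Ru$l$k0)"
    by (simp add: matmul_entry)
  finally have eqR: "?Ru $ i0 $ k0 = ?Rt $ i0 $ k0 + (t - u) * (\<Sum>l\<in>UNIV. ?Rt$i0$l * ?Ru$l$k0)" .
  have "m = \<bar>?Ru $ i0 $ k0\<bar>" using pm p by (simp add: f_def)
  also have "\<dots> = \<bar>?Rt $ i0 $ k0 + (t - u) * (\<Sum>l\<in>UNIV. ?Rt$i0$l * ?Ru$l$k0)\<bar>"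
    by (rule arg_cong[where f=abs, OF eqR])
  also have "\<dots> \<le> \<bar>?Rt $ i0 $ k0\<bar> + \<bar>(t - u) * (\<Sum>l\<in>UNIV. ?Rt$i0$l * ?Ru$l$k0)\<bar>"
    by (rule abs_triangle_ineq)
  also have "\<dots> = \<bar>?Rt $ i0 $ k0\<bar> + \<bar>t - u\<bar> * \<bar>\<Sum>l\<in>UNIV. ?Rt$i0$l * ?Ru$l$k0\<bar>"
    by (simp only: abs_mult)
  also have "\<dots> \<le> c + \<bar>t - u\<bar> * (real CARD('n) * (c * m))"
  proof (rule add_mono)
    show "\<bar>?Rt $ i0 $ k0\<bar> \<le> c" using bd by blast
    have "\<bar>\<Sum>l\<in>UNIV. ?Rt$i0$l * ?Ru$l$k0\<bar> \<le> (\<Sum>l\<in>UNIV. \<bar>?Rt$i0$l * ?Ru$l$k0\<bar>)"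
      by (rule sum_abs)
    also have "\<dots> \<le> (\<Sum>l\<in>(UNIV::'n set). c * m)"
    proof (rule sum_mono)
      fix l
      have "\<bar>?Ru$l$k0\<bar> \<le> m" using fm[of "(l,k0)"] by (simp add: f_def)
      then show "\<bar>?Rt$i0$l * ?Ru$l$k0\<bar> \<le> c * m"
        unfolding abs_mult using bd c0 by (intro mult_mono) auto
    qed
    also have "\<dots> = real CARD('n) * (c * m)" by simp
    finally show "\<bar>t - u\<bar> * \<bar>\<Sum>l\<in>UNIV. ?Rt$i0$l * ?Ru$l$k0\<bar> \<le> \<bar>t - u\<bar> * (real CARD('n) * (c * m))"
      by (simp add: mult_left_mono)
  qed
  finally have m1: "m \<le> c + (real CARD('n) * \<bar>t - u\<bar> * c) * m" by (simp add: mult_ac)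
  have m0: "0 \<le> m" using pm p by (simp add: f_def)
  have "(real CARD('n) * \<bar>t - u\<bar> * c) * m \<le> (1/2) * m" using small m0 by (rule mult_right_mono)
  then have "m \<le> 2 * c" using m1 by linarith
  then show ?thesis using fm[of "(i,k)"] by (simp add: f_def)
qed

lemma resolvent_zero_nonneg:
  fixes A :: "real^'n^'n"
  assumes "metzler A" "hurwitz A"
  shows "0 \<le> matrix_inv (mat 0 - A) $ i $ k"
proof -
  define R where "R t = matrix_inv (mat t - A)" for t
  define nn where "nn t \<longleftrightarrow> (\<forall>i k. 0 \<le> R t $ i $ k)" for t
  obtain t0 where t0: "t0 \<ge> 0" "nn t0"
    using resolvent_base[OF assms] unfolding nn_def R_def by blast
  define S where "S = {t. 0 \<le> t \<and> t \<le> t0 \<and> (\<forall>u. t \<le> u \<and> u \<le> t0 \<longrightarrow> nn u)}"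
  have t0S: "t0 \<in> S" using t0 by (auto simp: S_def)
  then have Sne: "S \<noteq> {}" by blast
  have Sbdd: "bdd_below S" unfolding S_def by (rule bdd_belowI[of _ 0]) auto
  define T where "T = Inf S"
  have T0: "0 \<le> T" unfolding T_def by (rule cInf_greatest[OF Sne]) (auto simp: S_def)
  define c where "c = 1 + (\<Sum>i\<in>UNIV. \<Sum>k\<in>UNIV. \<bar>R T $ i $ k\<bar>)"
  have cpos: "c > 0" unfolding c_def by (simp add: add_pos_nonneg sum_nonneg)
  have cbd: "\<forall>i k. \<bar>R T $ i $ k\<bar> \<le> c"
  proof (intro allI)
    fix i k
    have "\<bar>R T $ i $ k\<bar> \<le> (\<Sum>k\<in>UNIV. \<bar>R T $ i $ k\<bar>)" by (rule member_le_sum) auto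
    also have "\<dots> \<le> (\<Sum>i\<in>UNIV. \<Sum>k\<in>UNIV. \<bar>R T $ i $ k\<bar>)"
      by (rule member_le_sum) (auto simp: sum_nonneg)
    finally show "\<bar>R T $ i $ k\<bar> \<le> c" unfolding c_def by linarith
  qed
  define n where "n = real CARD('n)"
  have npos: "n > 0" unfolding n_def by simp
  define h where "h = 1 / (4 * n * c)"
  have hpos: "h > 0" unfolding h_def using npos cpos by simp
  have nhc: "n * h * c = 1/4" unfolding h_def using npos cpos by (simp add: field_simps)
  have "Inf S < T + h" using hpos T_def by simp
  then obtain u where uS: "u \<in> S" and uT: "u < T + h"
    using cInf_less_iff[OF Sne Sbdd] by blast
  have Tu: "T \<le> u" unfolding T_def by (rule cInf_lower[OF uS Sbdd])
  have u0: "u \<ge> 0" "u \<le> t0" "nn u" using uS by (auto simp: S_def)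
  have ubd: "\<forall>i k. R u $ i $ k \<le> 2 * c"
  proof (intro allI)
    fix i k
    have "n * \<bar>T - u\<bar> * c \<le> n * h * c"
      using Tu uT npos cpos by (intro mult_right_mono mult_left_mono) auto
    then have "n * \<bar>T - u\<bar> * c \<le> 1/4" using nhc by linarith
    then have sm: "real CARD('n) * \<bar>T - u\<bar> * c \<le> 1/2" unfolding n_def by linarith
    have "\<bar>R u $ i $ k\<bar> \<le> 2 * c"
      using resolvent_local_bound[OF assms(2) T0 u0(1) _ sm] cbd unfolding R_def by blast
    then show "R u $ i $ k \<le> 2 * c" by simp
  qed
  have down: "nn v" if "max 0 (u - h) \<le> v" "v \<le> u" for v
  proof -
    have v0: "v \<ge> 0" using that by simp
    have "n * (u - v) * (2 * c) \<le> n * h * (2 * c)"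
      using that npos cpos by (intro mult_right_mono mult_left_mono) auto
    then have "n * (u - v) * (2 * c) \<le> 1/2" using nhc by (simp add: algebra_simps)
    then have sm: "real CARD('n) * (u - v) * (2 * c) < 1" unfolding n_def by linarith
    show ?thesis unfolding nn_def
      using resolvent_down[OF assms(2) v0 that(2) _ _ sm] u0(3) ubd unfolding nn_def R_def by blast
  qed
  define t1 where "t1 = max 0 (u - h)"
  have t1S: "t1 \<in> S"
    unfolding S_def
  proof (intro CollectI conjI allI impI)
    show "0 \<le> t1" by (simp add: t1_def)
    show "t1 \<le> t0" using u0 hpos by (simp add: t1_def)
    fix w assume w: "t1 \<le> w \<and> w \<le> t0"
    show "nn w"
    proof (cases "w \<le> u")
      case True
      then show ?thesis using down w t1_def by blast
    next
      case False
      then show ?thesis using uS w by (auto simp: S_def)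
    qed
  qed
  have "T \<le> t1" unfolding T_def by (rule cInf_lower[OF t1S Sbdd])
  then have "t1 = 0" using uT unfolding t1_def by linarith
  then have "nn 0" using t1S by (auto simp: S_def)
  then show ?thesis unfolding nn_def R_def by blast
qed

lemma neg_matmul_left: "(- (X::real^'n^'n)) ** Y = - (X ** Y)"
  by (simp add: vec_eq_iff matmul_entry sum_negf)

lemma neg_matmul_right: "(X::real^'n^'n) ** (- Y) = - (X ** Y)"
  by (simp add: vec_eq_iff matmul_entry sum_negf)

lemma metzler_hurwitz_inv:
  fixes A :: "real^'n^'n"
  assumes "metzler A" "hurwitz A"
  shows "A ** matrix_inv A = mat 1" "matrix_inv A ** A = mat 1"
    "matrix_inv A $ i $ k \<le> 0" "matrix_inv A $ i $ i < 0"
proof -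
  have ker: "\<And>x. A *v x = 0 \<Longrightarrow> x = 0"
    using hurwitz_real_eig[OF assms(2), of 0] by simp
  show AN: "A ** matrix_inv A = mat 1" and NA: "matrix_inv A ** A = mat 1"
    using invertible_of_ker[OF ker] by auto
  define R0 where "R0 = matrix_inv (mat 0 - A)"
  have m0: "mat 0 - A = - A" by (simp add: vec_eq_iff mat_def)
  have r1: "(- A) ** R0 = mat 1" "R0 ** (- A) = mat 1"
    using hurwitz_resolvent[OF assms(2), of 0] m0 R0_def by auto
  have R0nn: "0 \<le> R0 $ i $ k" for i k using resolvent_zero_nonneg[OF assms] R0_def by simp
  have AR: "A ** (- R0) = mat 1" using r1(1) by (simp add: neg_matmul_left neg_matmul_right)
  have "matrix_inv A = matrix_inv A ** (A ** (- R0))" by (simp add: AR)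
  also have "\<dots> = - R0" by (simp add: matrix_mul_assoc NA)
  finally have inv: "matrix_inv A = - R0" .
  then show "matrix_inv A $ i $ k \<le> 0" using R0nn by simp
  have "((- A) ** R0) $ i $ i = 1" using r1(1) by (simp add: mat_entry)
  then have "(\<Sum>l\<in>UNIV. (- A $ i $ l) * R0 $ l $ i) = 1" by (simp add: matmul_entry)
  then have e: "(- A $ i $ i) * R0 $ i $ i + (\<Sum>l\<in>UNIV - {i}. (- A $ i $ l) * R0 $ l $ i) = 1"
    by (simp add: sum.remove[of UNIV i])
  have "(\<Sum>l\<in>UNIV - {i}. (- A $ i $ l) * R0 $ l $ i) \<le> 0"
  proof (rule sum_nonpos)
    fix l assume "l \<in> UNIV - {i}"
    then have "0 \<le> A $ i $ l" using assms(1) by (auto simp: metzler_def)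
    then show "(- A $ i $ l) * R0 $ l $ i \<le> 0" using R0nn by (simp add: mult_nonneg_nonneg)
  qed
  then have "(- A $ i $ i) * R0 $ i $ i \<ge> 1" using e by linarith
  then have "R0 $ i $ i \<noteq> 0" by auto
  then have "R0 $ i $ i > 0" using R0nn[of i i] by simp
  then show "matrix_inv A $ i $ i < 0" using inv by simp
qed

lemma quad_neg:
  fixes A :: "real^'n^'n" and p q a :: "real^'n"
  assumes M: "metzler A" and pp: "\<forall>i. p$i > 0" and qp: "\<forall>i. q$i > 0"
    and Ap: "\<forall>i. (\<Sum>l\<in>UNIV. A$i$l * p$l) = -1"
    and qA: "\<forall>l. (\<Sum>i\<in>UNIV. q$i * A$i$l) = -1"
  shows "(\<Sum>i\<in>UNIV. \<Sum>l\<in>UNIV. (q$i / p$i) * A$i$l * a$i * a$l)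
         \<le> - (1/2) * (\<Sum>i\<in>UNIV. (p$i + q$i) * (a$i / p$i)^2)"
proof -
  define y where "y i = a$i / p$i" for i
  define c where "c i l = q$i * A$i$l * p$l" for i l
  have ay: "a$i = p$i * y i" for i
  proof -
    have "p$i \<noteq> 0" using pp by (metis less_irrefl)
    then show ?thesis by (simp add: y_def)
  qed
  have trm: "(q$i / p$i) * A$i$l * a$i * a$l
      = (1/2) * (c i l * (y i)^2) + (1/2) * (c i l * (y l)^2) - (1/2) * (c i l * (y i - y l)^2)" for i l
  proof -
    have "(q$i / p$i) * A$i$l * a$i * a$l = c i l * y i * y l"
    proof -
      have "p$i \<noteq> 0" using pp by (metis less_irrefl)
      then show ?thesis unfolding c_def by (simp add: ay field_simps)
    qed
    then show ?thesis by (simp add: power2_eq_square algebra_simps)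
  qed
  have S1: "(\<Sum>i\<in>UNIV. \<Sum>l\<in>UNIV. c i l * (y i)^2) = - (\<Sum>i\<in>UNIV. q$i * (y i)^2)"
  proof -
    have "(\<Sum>i\<in>UNIV. \<Sum>l\<in>UNIV. c i l * (y i)^2) = (\<Sum>i\<in>UNIV. q$i * (y i)^2 * (\<Sum>l\<in>UNIV. A$i$l * p$l))"
      unfolding c_def by (simp add: sum_distrib_left mult_ac)
    also have "\<dots> = - (\<Sum>i\<in>UNIV. q$i * (y i)^2)" using Ap by (simp add: sum_negf)
    finally show ?thesis .
  qed
  have S2: "(\<Sum>i\<in>UNIV. \<Sum>l\<in>UNIV. c i l * (y l)^2) = - (\<Sum>l\<in>UNIV. p$l * (y l)^2)"
  proof -
    have "(\<Sum>i\<in>UNIV. \<Sum>l\<in>UNIV. c i l * (y l)^2) = (\<Sum>l\<in>UNIV. \<Sum>i\<in>UNIV. c i l * (y l)^2)"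
      by (rule sum.swap)
    also have "\<dots> = (\<Sum>l\<in>UNIV. p$l * (y l)^2 * (\<Sum>i\<in>UNIV. q$i * A$i$l))"
      unfolding c_def by (simp add: sum_distrib_left mult_ac)
    also have "\<dots> = - (\<Sum>l\<in>UNIV. p$l * (y l)^2)" using qA by (simp add: sum_negf)
    finally show ?thesis .
  qed
  have S3: "0 \<le> (\<Sum>i\<in>UNIV. \<Sum>l\<in>UNIV. c i l * (y i - y l)^2)"
  proof (intro sum_nonneg)
    fix i l
    show "0 \<le> c i l * (y i - y l)^2"
    proof (cases "i = l")
      case True then show ?thesis by simp
    next
      case False
      then have "0 \<le> A$i$l" using M by (simp add: metzler_def)
      then have "0 \<le> c i l" unfolding c_def using pp qp by (simp add: less_imp_le)
      then show ?thesis by simp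
    qed
  qed
  have "(\<Sum>i\<in>UNIV. \<Sum>l\<in>UNIV. (q$i / p$i) * A$i$l * a$i * a$l)
      = (1/2) * (\<Sum>i\<in>UNIV. \<Sum>l\<in>UNIV. c i l * (y i)^2) + (1/2) * (\<Sum>i\<in>UNIV. \<Sum>l\<in>UNIV. c i l * (y l)^2)
        - (1/2) * (\<Sum>i\<in>UNIV. \<Sum>l\<in>UNIV. c i l * (y i - y l)^2)"
    unfolding trm by (simp add: sum.distrib sum_subtractf sum_distrib_left)
  also have "\<dots> \<le> (1/2) * (- (\<Sum>i\<in>UNIV. q$i * (y i)^2)) + (1/2) * (- (\<Sum>l\<in>UNIV. p$l * (y l)^2))"
    unfolding S1 S2 using S3 by linarith
  also have "\<dots> = - (1/2) * (\<Sum>i\<in>UNIV. (p$i + q$i) * (a$i / p$i)^2)"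
    by (simp add: y_def sum.distrib algebra_simps)
  finally show ?thesis .
qed


lemma sum_if_eq: "(\<Sum>i\<in>UNIV. f i * (if i = (j::'n::finite) then X else 0)) = f j * (X::real)"
proof -
  have "(\<Sum>i\<in>UNIV. f i * (if i = j then X else 0)) = (\<Sum>i\<in>UNIV. if j = i then f i * X else 0)"
    by (rule sum.cong) auto
  also have "\<dots> = f j * X" using sum.delta'[of UNIV j "\<lambda>i. f i * X"] by simp
  finally show ?thesis .
qed

lemma core_jac:
  fixes A :: "real^'n^'n" and p q a b :: "real^'n"
  assumes M: "metzler A" and pp: "\<forall>i. p$i > 0" and qp: "\<forall>i. q$i > 0"
    and Ap: "\<forall>i. (\<Sum>l\<in>UNIV. A$i$l * p$l) = -1"
    and qA: "\<forall>l. (\<Sum>i\<in>UNIV. q$i * A$i$l) = -1"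
    and kz: "kz \<ge> 0" and km: "km > 0" and az: "az > 0" and sg: "sg \<ge> 0"
    and r1: "\<forall>i. (\<Sum>l\<in>UNIV. A$i$l * a$l) - (if i = j then kz * a$j + km * wa else 0) = sg * a$i - om * b$i"
    and r2: "\<forall>i. (\<Sum>l\<in>UNIV. A$i$l * b$l) - (if i = j then kz * b$j + km * wb else 0) = sg * b$i + om * a$i"
    and s1: "az * a$j = sg * wa - om * wb"
    and s2: "az * b$j = sg * wb + om * wa"
  shows "a = 0 \<and> b = 0 \<and> wa = 0 \<and> wb = 0"
proof -
  define d where "d i = q$i / p$i" for i
  have dpos: "d i > 0" for i using pp qp by (simp add: d_def)
  define Qa where "Qa = (\<Sum>i\<in>UNIV. \<Sum>l\<in>UNIV. (q$i / p$i) * A$i$l * a$i * a$l)"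
  define Qb where "Qb = (\<Sum>i\<in>UNIV. \<Sum>l\<in>UNIV. (q$i / p$i) * A$i$l * b$i * b$l)"
  have Qa_eq: "Qa = (\<Sum>i\<in>UNIV. d i * a$i * (\<Sum>l\<in>UNIV. A$i$l * a$l))"
    unfolding Qa_def d_def by (simp add: sum_distrib_left mult_ac)
  have Qb_eq: "Qb = (\<Sum>i\<in>UNIV. d i * b$i * (\<Sum>l\<in>UNIV. A$i$l * b$l))"
    unfolding Qb_def d_def by (simp add: sum_distrib_left mult_ac)
  have e1: "Qa - d j * a$j * (kz * a$j + km * wa) = sg * (\<Sum>i\<in>UNIV. d i * (a$i)^2) - om * (\<Sum>i\<in>UNIV. d i * a$i * b$i)"
  proof -
    have "(\<Sum>i\<in>UNIV. d i * a$i * ((\<Sum>l\<in>UNIV. A$i$l * a$l) - (if i = j then kz * a$j + km * wa else 0)))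
        = (\<Sum>i\<in>UNIV. d i * a$i * (sg * a$i - om * b$i))"
      using r1 by simp
    moreover have "(\<Sum>i\<in>UNIV. d i * a$i * ((\<Sum>l\<in>UNIV. A$i$l * a$l) - (if i = j then kz * a$j + km * wa else 0)))
        = Qa - d j * a$j * (kz * a$j + km * wa)"
      unfolding Qa_eq right_diff_distrib sum_subtractf sum_if_eq by simp
    moreover have "(\<Sum>i\<in>UNIV. d i * a$i * (sg * a$i - om * b$i))
        = sg * (\<Sum>i\<in>UNIV. d i * (a$i)^2) - om * (\<Sum>i\<in>UNIV. d i * a$i * b$i)"
      by (simp add: sum_subtractf sum_distrib_left power2_eq_square algebra_simps)
    ultimately show ?thesis by simp
  qed
  have e2: "Qb - d j * b$j * (kz * b$j + km * wb) = sg * (\<Sum>i\<in>UNIV. d i * (b$i)^2) + om * (\<Sum>i\<in>UNIV. d i * a$i * b$i)"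
  proof -
    have "(\<Sum>i\<in>UNIV. d i * b$i * ((\<Sum>l\<in>UNIV. A$i$l * b$l) - (if i = j then kz * b$j + km * wb else 0)))
        = (\<Sum>i\<in>UNIV. d i * b$i * (sg * b$i + om * a$i))"
      using r2 by simp
    moreover have "(\<Sum>i\<in>UNIV. d i * b$i * ((\<Sum>l\<in>UNIV. A$i$l * b$l) - (if i = j then kz * b$j + km * wb else 0)))
        = Qb - d j * b$j * (kz * b$j + km * wb)"
      unfolding Qb_eq right_diff_distrib sum_subtractf sum_if_eq by simp
    moreover have "(\<Sum>i\<in>UNIV. d i * b$i * (sg * b$i + om * a$i))
        = sg * (\<Sum>i\<in>UNIV. d i * (b$i)^2) + om * (\<Sum>i\<in>UNIV. d i * a$i * b$i)"
      by (simp add: sum.distrib sum_distrib_left power2_eq_square algebra_simps)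
    ultimately show ?thesis by simp
  qed
  have "az * (a$j * wa + b$j * wb) = (az * a$j) * wa + (az * b$j) * wb" by (simp add: algebra_simps)
  also have "\<dots> = (sg * wa - om * wb) * wa + (sg * wb + om * wa) * wb" by (simp only: s1 s2)
  also have "\<dots> = sg * (wa^2 + wb^2)" by (simp add: power2_eq_square algebra_simps)
  finally have "az * (a$j * wa + b$j * wb) = sg * (wa^2 + wb^2)" .
  then have cross: "a$j * wa + b$j * wb \<ge> 0"
    using az sg by (metis sum_power2_ge_zero zero_le_mult_iff less_le_not_le)
  have t1: "0 \<le> sg * (\<Sum>i\<in>UNIV. d i * (a$i)^2)" using sg dpos by (simp add: sum_nonneg less_imp_le)
  have t2: "0 \<le> sg * (\<Sum>i\<in>UNIV. d i * (b$i)^2)" using sg dpos by (simp add: sum_nonneg less_imp_le)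
  have t3: "0 \<le> d j * kz * ((a$j)^2 + (b$j)^2)" using kz dpos[of j] by simp
  have t4: "0 \<le> d j * km * (a$j * wa + b$j * wb)" using km dpos[of j] cross by simp
  have "Qa + Qb = sg * (\<Sum>i\<in>UNIV. d i * (a$i)^2) + sg * (\<Sum>i\<in>UNIV. d i * (b$i)^2)
       + d j * kz * ((a$j)^2 + (b$j)^2) + d j * km * (a$j * wa + b$j * wb)"
    using e1 e2 by (simp add: power2_eq_square algebra_simps)
  then have Qpos: "0 \<le> Qa + Qb" using t1 t2 t3 t4 by linarith
  have qa: "Qa \<le> - (1/2) * (\<Sum>i\<in>UNIV. (p$i + q$i) * (a$i / p$i)^2)"
    unfolding Qa_def by (rule quad_neg[OF M pp qp Ap qA])
  have qb: "Qb \<le> - (1/2) * (\<Sum>i\<in>UNIV. (p$i + q$i) * (b$i / p$i)^2)"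
    unfolding Qb_def by (rule quad_neg[OF M pp qp Ap qA])
  have nn: "0 \<le> (p$i + q$i) * (x / p$i)^2" for i x using pp qp by (simp add: add_pos_pos less_imp_le)
  have SA: "(\<Sum>i\<in>UNIV. (p$i + q$i) * (a$i / p$i)^2) = 0"
    and SB: "(\<Sum>i\<in>UNIV. (p$i + q$i) * (b$i / p$i)^2) = 0"
  proof -
    have "0 \<le> (\<Sum>i\<in>UNIV. (p$i + q$i) * (a$i / p$i)^2)" "0 \<le> (\<Sum>i\<in>UNIV. (p$i + q$i) * (b$i / p$i)^2)"
      using nn by (simp_all add: sum_nonneg)
    then show "(\<Sum>i\<in>UNIV. (p$i + q$i) * (a$i / p$i)^2) = 0" "(\<Sum>i\<in>UNIV. (p$i + q$i) * (b$i / p$i)^2) = 0"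
      using qa qb Qpos by linarith+
  qed
  have zero: "x$i = 0" if "(\<Sum>i\<in>UNIV. (p$i + q$i) * (x$i / p$i)^2) = 0" for x :: "real^'n" and i
  proof -
    have "(p$i + q$i) * (x$i / p$i)^2 = 0"
      using that nn sum_nonneg_eq_0_iff[of UNIV "\<lambda>i. (p$i + q$i) * (x$i / p$i)^2"] by simp
    moreover have "p$i + q$i > 0" "p$i > 0" using pp qp by (auto intro: add_pos_pos)
    ultimately show ?thesis by simp
  qed
  have a0: "a = 0" using zero[OF SA] by (simp add: vec_eq_iff)
  have b0: "b = 0" using zero[OF SB] by (simp add: vec_eq_iff)
  have "- (km * wa) = 0" using r1[rule_format, of j] a0 b0 by simp
  then have "wa = 0" using km by simp
  moreover have "- (km * wb) = 0" using r2[rule_format, of j] a0 b0 by simp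
  then have "wb = 0" using km by simp
  ultimately show ?thesis using a0 b0 by simp
qed

lemma sum_option: "(\<Sum>r\<in>(UNIV::'n::finite option set). f r) = f None + (\<Sum>l\<in>UNIV. f (Some l))"
  by (simp add: UNIV_option_conv sum.reindex)

lemma vn_deriv: "((\<lambda>w. w $ k) has_derivative (\<lambda>h. h $ k)) F"
  by (rule bounded_linear_imp_has_derivative) (rule bounded_linear_vec_nth)

definition jac :: "real^'n^'n \<Rightarrow> 'n \<Rightarrow> real \<Rightarrow> real \<Rightarrow> real \<Rightarrow> real^('n option) \<Rightarrow> real^('n option)^('n option)" where
 "jac A j kp alpha mu P = (\<chi> r c. case r of
     Some i \<Rightarrow> (case c of Some l \<Rightarrow> A$i$l - (if i = j \<and> l = j then kp * P$None else 0)
                       | None \<Rightarrow> - (if i = j then kp * P$Some j else 0))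
   | None \<Rightarrow> (case c of Some l \<Rightarrow> (if l = j then alpha * P$None else 0)
                       | None \<Rightarrow> - alpha * (mu - P$Some j)))"

lemma cl_comp_deriv:
  fixes A :: "real^'n^'n" and j :: 'n
  shows "((\<lambda>w. closed_loop A b0 j kp alpha mu w $ k) has_derivative (\<lambda>h. (jac A j kp alpha mu P *v h) $ k)) (at P)"
proof (cases k)
  case None
  have "((\<lambda>w. - alpha * w $ None * (mu - w $ Some j)) has_derivative
        (\<lambda>h. - alpha * h $ None * (mu - P $ Some j) + (- alpha * P $ None) * (- h $ Some j))) (at P)"
    by (auto intro!: derivative_eq_intros vn_deriv simp: algebra_simps)
  then show ?thesis using None
    by (simp add: closed_loop_def Let_def jac_def matrix_vector_mult_def sum_option algebra_simps
        if_distrib cong: if_cong)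
next
  case (Some i)
  have "((\<lambda>w. (\<Sum>l\<in>UNIV. A$i$l * w $ Some l) - kp * w $ Some j * w $ None * (axis j 1 :: real^'n) $ i + b0 $ i) has_derivative
        (\<lambda>h. (\<Sum>l\<in>UNIV. A$i$l * h $ Some l) - kp * (h $ Some j * P $ None + P $ Some j * h $ None) * (axis j 1 :: real^'n) $ i)) (at P)"
    by (auto intro!: derivative_eq_intros vn_deriv simp: algebra_simps)
  moreover have "(\<lambda>w. closed_loop A b0 j kp alpha mu w $ k) =
      (\<lambda>w. (\<Sum>l\<in>UNIV. A$i$l * w $ Some l) - kp * w $ Some j * w $ None * (axis j 1 :: real^'n) $ i + b0 $ i)"
    using Some by (simp add: closed_loop_def Let_def matrix_vector_mult_def fun_eq_iff)
  moreover have "(\<lambda>h. (jac A j kp alpha mu P *v h) $ k) =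
      (\<lambda>h. (\<Sum>l\<in>UNIV. A$i$l * h $ Some l) - kp * (h $ Some j * P $ None + P $ Some j * h $ None) * (axis j 1 :: real^'n) $ i)"
  proof
    fix h :: "real^('n option)"
    have "(jac A j kp alpha mu P *v h) $ k = - (if i = j then kp * P$Some j else 0) * h $ None
      + (\<Sum>l\<in>UNIV. (A$i$l - (if i = j \<and> l = j then kp * P$None else 0)) * h $ Some l)"
      using Some by (simp add: jac_def matrix_vector_mult_def sum_option)
    also have "(\<Sum>l\<in>UNIV. (A$i$l - (if i = j \<and> l = j then kp * P$None else 0)) * h $ Some l)
        = (\<Sum>l\<in>UNIV. A$i$l * h $ Some l) - (\<Sum>l\<in>UNIV. (if i = j \<and> l = j then kp * P$None else 0) * h $ Some l)"
      by (simp add: left_diff_distrib sum_subtractf)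
    also have "(\<Sum>l\<in>UNIV. (if i = j \<and> l = j then kp * P$None else 0) * h $ Some l)
        = (if i = j then kp * P$None * h $ Some j else 0)"
    proof (cases "i = j")
      case True
      have "(\<Sum>l\<in>UNIV. (if i = j \<and> l = j then kp * P$None else 0) * h $ Some l)
          = (\<Sum>l\<in>UNIV. if j = l then kp * P$None * h $ Some l else 0)"
        using True by (intro sum.cong) auto
      also have "\<dots> = kp * P$None * h $ Some j" using sum.delta'[of UNIV j "\<lambda>l. kp * P$None * h $ Some l"] by simp
      finally show ?thesis using True by simp
    next
      case False then show ?thesis by simp
    qed
    finally show "(jac A j kp alpha mu P *v h) $ k = (\<Sum>l\<in>UNIV. A$i$l * h $ Some l) - kp * (h $ Some j * P $ None + P $ Some j * h $ None) * (axis j 1 :: real^'n) $ i"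
      by (cases "i = j") (auto simp: axis_def algebra_simps)
  qed
  ultimately show ?thesis by simp
qed


lemma cl_deriv:
  fixes A :: "real^'n^'n" and j :: 'n
  shows "(closed_loop A b0 j kp alpha mu has_derivative (\<lambda>h. jac A j kp alpha mu P *v h)) (at P)"
proof -
  have "(closed_loop A b0 j kp alpha mu has_derivative (\<lambda>h. jac A j kp alpha mu P *v h)) (at P within UNIV)"
  proof (rule has_derivative_componentwise_within[THEN iffD2], intro ballI)
    fix e :: "real^('n option)" assume "e \<in> Basis"
    then obtain k where e: "e = axis k 1" by (auto simp: Basis_vec_def)
    show "((\<lambda>x. closed_loop A b0 j kp alpha mu x \<bullet> e) has_derivative (\<lambda>x. (jac A j kp alpha mu P *v x) \<bullet> e)) (at P within UNIV)"
      unfolding e cart_eq_inner_axis[symmetric] using cl_comp_deriv[of A b0 j kp alpha mu k P] by simp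
  qed
  then show ?thesis by simp
qed

lemma row_sum:
  fixes A :: "real^'n^'n" and j :: 'n
  shows "(\<Sum>l\<in>UNIV. (A$i$l - (if i = j \<and> l = j then c else 0)) * x l) = (\<Sum>l\<in>UNIV. A$i$l * x l) - (if i = j then c * x j else 0)"
proof -
  have "(\<Sum>l\<in>UNIV. (if i = j \<and> l = j then c else 0) * x l) = (if i = j then c * x j else 0)"
  proof (cases "i = j")
    case True
    have "(\<Sum>l\<in>UNIV. (if i = j \<and> l = j then c else 0) * x l) = (\<Sum>l\<in>UNIV. if j = l then c * x l else 0)"
      using True by (intro sum.cong) auto
    also have "\<dots> = c * x j" using sum.delta'[of UNIV j "\<lambda>l. c * x l"] by simp
    finally show ?thesis using True by simp
  qed simp
  then show ?thesis by (simp add: left_diff_distrib sum_subtractf)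
qed

lemma delta_sum:
  fixes j :: "'n::finite"
  shows "(\<Sum>l\<in>UNIV. (if l = j then (c::real) else 0) * x l) = c * x j"
proof -
  have "(\<Sum>l\<in>UNIV. (if l = j then c else 0) * x l) = (\<Sum>l\<in>UNIV. if j = l then c * x l else 0)"
    by (intro sum.cong) auto
  also have "\<dots> = c * x j" using sum.delta'[of UNIV j "\<lambda>l. c * x l"] by simp
  finally show ?thesis .
qed

lemma jac_hurwitz:
  fixes A :: "real^'n^'n" and j :: 'n and p q :: "real^'n" and P :: "real^('n option)"
  assumes M: "metzler A" and pp: "\<forall>i. p$i > 0" and qp: "\<forall>i. q$i > 0"
    and Ap: "\<forall>i. (\<Sum>l\<in>UNIV. A$i$l * p$l) = -1"
    and qA: "\<forall>l. (\<Sum>i\<in>UNIV. q$i * A$i$l) = -1"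
    and kp: "kp > 0" and al: "alpha > 0" and mu: "mu > 0"
    and zs: "P $ None > 0" and xj: "P $ Some j = mu"
  shows "hurwitz (jac A j kp alpha mu P)"
  unfolding hurwitz_def eigenvalue_def
proof (intro allI impI)
  fix lam assume "\<exists>v. v \<noteq> 0 \<and> (\<chi> i k. complex_of_real (jac A j kp alpha mu P $ i $ k)) *v v = lam *s v"
  then obtain v :: "complex^('n option)" where v0: "v \<noteq> 0"
    and ev: "(\<chi> i k. complex_of_real (jac A j kp alpha mu P $ i $ k)) *v v = lam *s v" by blast
  define J where "J = jac A j kp alpha mu P"
  have evc: "(\<Sum>r\<in>UNIV. complex_of_real (J $ k $ r) * v $ r) = lam * v $ k" for k
    using arg_cong[where f="\<lambda>x. x $ k", OF ev] by (simp add: matrix_vector_mult_def J_def)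
  have E1: "(\<Sum>l\<in>UNIV. complex_of_real (A$i$l) * v $ Some l)
      - (if i = j then complex_of_real (kp * P $ None) * v $ Some j + complex_of_real (kp * mu) * v $ None else 0)
      = lam * v $ Some i" for i
  proof -
    have "lam * v $ Some i = (\<Sum>r\<in>UNIV. complex_of_real (J $ Some i $ r) * v $ r)" using evc by simp
    also have "\<dots> = complex_of_real (- (if i = j then kp * mu else 0)) * v $ None
       + (\<Sum>l\<in>UNIV. complex_of_real (A$i$l - (if i = j \<and> l = j then kp * P $ None else 0)) * v $ Some l)"
      by (simp add: sum_option J_def jac_def xj)
    also have "(\<Sum>l\<in>UNIV. complex_of_real (A$i$l - (if i = j \<and> l = j then kp * P $ None else 0)) * v $ Some l)
       = (\<Sum>l\<in>UNIV. (complex_of_real (A$i$l) - (if i = j \<and> l = j then complex_of_real (kp * P $ None) else 0)) * v $ Some l)"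
      by (intro sum.cong) auto
    also have "\<dots> = (\<Sum>l\<in>UNIV. complex_of_real (A$i$l) * v $ Some l)
        - (\<Sum>l\<in>UNIV. (if i = j \<and> l = j then complex_of_real (kp * P $ None) else 0) * v $ Some l)"
      by (simp add: left_diff_distrib sum_subtractf)
    also have "(\<Sum>l\<in>UNIV. (if i = j \<and> l = j then complex_of_real (kp * P $ None) else 0) * v $ Some l)
        = (if i = j then complex_of_real (kp * P $ None) * v $ Some j else 0)"
    proof (cases "i = j")
      case True
      have "(\<Sum>l\<in>UNIV. (if i = j \<and> l = j then complex_of_real (kp * P $ None) else 0) * v $ Some l)
          = (\<Sum>l\<in>UNIV. if j = l then complex_of_real (kp * P $ None) * v $ Some l else 0)"
        using True by (intro sum.cong) auto
      also have "\<dots> = complex_of_real (kp * P $ None) * v $ Some j"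
        using sum.delta'[of UNIV j "\<lambda>l. complex_of_real (kp * P $ None) * v $ Some l"] by simp
      finally show ?thesis using True by simp
    qed simp
    finally show ?thesis by (cases "i = j") (auto simp: algebra_simps)
  qed
  have E2: "complex_of_real (alpha * P $ None) * v $ Some j = lam * v $ None"
  proof -
    have "lam * v $ None = (\<Sum>r\<in>UNIV. complex_of_real (J $ None $ r) * v $ r)" using evc by simp
    also have "\<dots> = (\<Sum>l\<in>UNIV. complex_of_real (if l = j then alpha * P $ None else 0) * v $ Some l)"
      by (simp add: sum_option J_def jac_def xj)
    also have "\<dots> = (\<Sum>l\<in>UNIV. if j = l then complex_of_real (alpha * P $ None) * v $ Some l else 0)"
      by (intro sum.cong) auto
    also have "\<dots> = complex_of_real (alpha * P $ None) * v $ Some j"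
      using sum.delta'[of UNIV j "\<lambda>l. complex_of_real (alpha * P $ None) * v $ Some l"] by simp
    finally show ?thesis by simp
  qed
  show "Re lam < 0"
  proof (rule ccontr)
    assume "\<not> Re lam < 0"
    then have sg: "Re lam \<ge> 0" by simp
    define a where "a = (\<chi> i. Re (v $ Some i))"
    define b where "b = (\<chi> i. Im (v $ Some i))"
    have r1: "\<forall>i. (\<Sum>l\<in>UNIV. A$i$l * a$l) - (if i = j then (kp * P $ None) * a$j + (kp * mu) * Re (v $ None) else 0)
        = Re lam * a$i - Im lam * b$i"
    proof
      fix i
      show "(\<Sum>l\<in>UNIV. A$i$l * a$l) - (if i = j then (kp * P $ None) * a$j + (kp * mu) * Re (v $ None) else 0)
        = Re lam * a$i - Im lam * b$i"
        using arg_cong[where f=Re, OF E1[of i]] by (cases "i = j") (simp_all add: a_def b_def)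
    qed
    have r2: "\<forall>i. (\<Sum>l\<in>UNIV. A$i$l * b$l) - (if i = j then (kp * P $ None) * b$j + (kp * mu) * Im (v $ None) else 0)
        = Re lam * b$i + Im lam * a$i"
    proof
      fix i
      show "(\<Sum>l\<in>UNIV. A$i$l * b$l) - (if i = j then (kp * P $ None) * b$j + (kp * mu) * Im (v $ None) else 0)
        = Re lam * b$i + Im lam * a$i"
        using arg_cong[where f=Im, OF E1[of i]] by (cases "i = j") (simp_all add: a_def b_def algebra_simps)
    qed
    have s1: "(alpha * P $ None) * a$j = Re lam * Re (v $ None) - Im lam * Im (v $ None)"
      using arg_cong[where f=Re, OF E2] by (simp add: a_def)
    have s2: "(alpha * P $ None) * b$j = Re lam * Im (v $ None) + Im lam * Re (v $ None)"
      using arg_cong[where f=Im, OF E2] by (simp add: b_def algebra_simps)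
    have z0: "P $ None > 0" using zs by simp
    have "a = 0 \<and> b = 0 \<and> Re (v $ None) = 0 \<and> Im (v $ None) = 0"
      by (rule core_jac[OF M pp qp Ap qA _ _ _ sg r1 r2 s1 s2])
        (use kp mu al z0 in \<open>simp_all add: less_imp_le\<close>)
    then have h: "\<forall>i. Re (v $ Some i) = 0 \<and> Im (v $ Some i) = 0" "Re (v $ None) = 0" "Im (v $ None) = 0"
      by (auto simp: vec_eq_iff a_def b_def)
    have "v $ k = 0" for k using h by (cases k) (auto simp: complex_eq_iff)
    then have "v = 0" by (simp add: vec_eq_iff)
    then show False using v0 by simp
  qed
qed

lemma sum_mat1_row: "(\<Sum>m\<in>UNIV. (mat 1 :: real^'n^'n) $ i $ m) = 1"
  by (simp add: mat_def)

theorem mainTheorem17: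
  fixes A :: "real^'n^'n" and b0 :: "real^'n" and j :: 'n
    and mu alpha kp :: real
  assumes "metzler A" and "hurwitz A"
    and "\<forall>i. b0 $ i \<ge> 0"
    and "0 < mu" and "mu < - (matrix_inv A *v b0) $ j"
    and "alpha > 0" and "kp > 0"
  shows "let g0 = - (matrix_inv A *v b0) $ j;
             gn = - (matrix_inv A *v axis j 1) $ j;
             zs = (g0 - mu) / (gn * mu * kp);
             xs = - (matrix_inv A *v (b0 - (kp * mu * zs) *\<^sub>R axis j 1))
         in loc_exp_stable (closed_loop A b0 j kp alpha mu)
              (\<chi> k. case k of Some i \<Rightarrow> xs $ i | None \<Rightarrow> zs)"
proof -
  define Ai where "Ai = matrix_inv A"
  have AN: "A ** Ai = mat 1" and NA: "Ai ** A = mat 1"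
    and Nle: "\<And>i k. Ai $ i $ k \<le> 0" and Ndiag: "\<And>i. Ai $ i $ i < 0"
    using metzler_hurwitz_inv[OF assms(1,2)] unfolding Ai_def by auto
  define g0 where "g0 = - (Ai *v b0) $ j"
  define gn where "gn = - (Ai *v axis j 1) $ j"
  define zs where "zs = (g0 - mu) / (gn * mu * kp)"
  define xs where "xs = - (Ai *v (b0 - (kp * mu * zs) *\<^sub>R axis j 1))"
  define P :: "real^('n option)" where "P = (\<chi> k. case k of Some i \<Rightarrow> xs $ i | None \<Rightarrow> zs)"
  have colj: "(Ai *v axis j 1) $ j = Ai $ j $ j"
  proof -
    have "(Ai *v axis j 1) $ j = (\<Sum>l\<in>UNIV. (if l = j then 1 else 0) * Ai $ j $ l)"
      by (simp add: matrix_vector_mult_def axis_def mult_ac)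
    also have "\<dots> = Ai $ j $ j" by (rule delta_sum[where c=1, simplified])
    finally show ?thesis .
  qed
  have gn: "gn > 0" unfolding gn_def colj using Ndiag[of j] by simp
  have g0: "g0 > mu" using assms(5) unfolding g0_def Ai_def by simp
  have zspos: "zs > 0" unfolding zs_def using gn g0 assms(4,7) by simp
  have K: "kp * mu * zs = (g0 - mu) / gn" unfolding zs_def using gn assms(4,7) by (simp add: field_simps)
  have xsj: "xs $ j = mu"
  proof -
    have "xs $ j = - (Ai *v b0) $ j + (kp * mu * zs) * (Ai *v axis j 1) $ j"
      unfolding xs_def by (simp add: matrix_vector_mult_diff_distrib matrix_vector_mult_scaleR)
    also have "\<dots> = g0 - ((g0 - mu) / gn) * gn" unfolding K g0_def gn_def by simp
    also have "\<dots> = mu" using gn by simp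
    finally show ?thesis .
  qed
  define p :: "real^'n" where "p = (\<chi> i. \<Sum>l\<in>UNIV. - Ai $ i $ l)"
  define q :: "real^'n" where "q = (\<chi> i. \<Sum>l\<in>UNIV. - Ai $ l $ i)"
  have pp: "\<forall>i. p $ i > 0"
  proof
    fix i
    have "- Ai $ i $ i \<le> (\<Sum>l\<in>UNIV. - Ai $ i $ l)"
      by (rule member_le_sum) (auto simp: Nle)
    then show "p $ i > 0" using Ndiag[of i] by (simp add: p_def)
  qed
  have qp: "\<forall>i. q $ i > 0"
  proof
    fix i
    have "- Ai $ i $ i \<le> (\<Sum>l\<in>UNIV. - Ai $ l $ i)"
      by (rule member_le_sum) (auto simp: Nle)
    then show "q $ i > 0" using Ndiag[of i] by (simp add: q_def)
  qed
  have Ap: "\<forall>i. (\<Sum>l\<in>UNIV. A$i$l * p$l) = -1"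
  proof
    fix i
    have "(\<Sum>l\<in>UNIV. A$i$l * p$l) = (\<Sum>l\<in>UNIV. \<Sum>m\<in>UNIV. - (A$i$l * Ai$l$m))"
      unfolding p_def by (simp add: sum_distrib_left)
    also have "\<dots> = - (\<Sum>l\<in>UNIV. \<Sum>m\<in>UNIV. A$i$l * Ai$l$m)" by (simp add: sum_negf)
    also have "\<dots> = - (\<Sum>m\<in>UNIV. \<Sum>l\<in>UNIV. A$i$l * Ai$l$m)"
      using sum.swap[of "\<lambda>l m. A$i$l * Ai$l$m" UNIV UNIV] by simp
    also have "\<dots> = - (\<Sum>m\<in>UNIV. (A ** Ai) $ i $ m)" by (simp add: matmul_entry)
    also have "\<dots> = -1" unfolding AN sum_mat1_row by simp
    finally show "(\<Sum>l\<in>UNIV. A$i$l * p$l) = -1" .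
  qed
  have qA: "\<forall>l. (\<Sum>i\<in>UNIV. q$i * A$i$l) = -1"
  proof
    fix l
    have "(\<Sum>i\<in>UNIV. q$i * A$i$l) = (\<Sum>i\<in>UNIV. \<Sum>m\<in>UNIV. - (Ai$m$i * A$i$l))"
      unfolding q_def by (simp add: sum_distrib_right)
    also have "\<dots> = - (\<Sum>i\<in>UNIV. \<Sum>m\<in>UNIV. Ai$m$i * A$i$l)" by (simp add: sum_negf)
    also have "\<dots> = - (\<Sum>m\<in>UNIV. \<Sum>i\<in>UNIV. Ai$m$i * A$i$l)"
      using sum.swap[of "\<lambda>i m. Ai$m$i * A$i$l" UNIV UNIV] by simp
    also have "\<dots> = - (\<Sum>m\<in>UNIV. (Ai ** A) $ m $ l)" by (simp add: matmul_entry)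
    also have "\<dots> = -1" unfolding NA by (simp add: mat_def)
    finally show "(\<Sum>i\<in>UNIV. q$i * A$i$l) = -1" .
  qed
  have PN: "P $ None > 0" using zspos by (simp add: P_def)
  have PS: "P $ Some j = mu" using xsj by (simp add: P_def)
  have "loc_exp_stable (closed_loop A b0 j kp alpha mu) P"
    unfolding loc_exp_stable_def
    using cl_deriv[of A b0 j kp alpha mu P]
      jac_hurwitz[OF assms(1) pp qp Ap qA assms(7) assms(6) assms(4) PN PS] by blast
  then show ?thesis
    unfolding Let_def P_def xs_def zs_def g0_def gn_def Ai_def .
qed

end
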